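(* Let $a,b\in\mathbb{H}$ with $b\in C_a$, and let $P\in\mathbb{H}[q_1,q_2]$ vanish at $(a,b)$. Let $P_{q_2}$ be the partial Cullen derivative of $P$ with respect to $q_2$. If the multiplicity $n$ of the zero $\mathbb{H}\times\{b\}$ of $P$ satisfies $n\ge2$, then ${\rm Res}(P,P_{q_2};q_2)\equiv0$.
   Context: $\mathbb{H}$ denotes the quaternions; for $a\in\mathbb{H}$, $C_a=\{q\in\mathbb{H}: qa=aq\}$. A slice regular polynomial in two quaternionic variables is a function $\mathbb{H}^2\to\mathbb{H}$ of the form $P(q_1,q_2)=\sum_{n=0}^{N}\sum_{m=0}^{M}q_1^nq_2^ma_{n,m}$ with $a_{n,m}\in\mathbb{H}$ (coefficients on the right); the set of these is $\mathbb{H}[q_1,q_2]$, and $\mathbb{H}[q]$ denotes one-variable polynomials $\sum q^na_n$. The $*$-product is $\big(\sum q_1^nq_2^ma_{n,m}\big)*\big(\sum q_1^nq_2^mb_{n,m}\big)=\sum_{n,m}q_1^nq_2^m\sum_{r\le n,s\le m}a_{r,s}b_{n-r,m-s}$; $(q_2-b)^{*n}$ is the $n$-fold $*$-power. The partial Cullen derivative is $P_{q_2}=\sum_{m\ge1}mq_1^{n}q_2^{m-1}a_{n,m}$. Multiplicity: if $P$ vanishes on $\mathbb{H}\times\{b\}$, its multiplicity there is $n\in\mathbb N$ such that $P=(q_2-b)^{*n}*S$ with $S\in\mathbb{H}[q_1,q_2]$ not vanishing identically on $\mathbb{H}\times\{b\}$. Regular resultant: $(\mathbb{H}[q],+,*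 )$ is an Ore domain with skew field of quotients $\mathcal L$; ${\rm Det}^*_N$ is the Dieudonné determinant of $N\times N$ matrices over $\mathcal L$ (the unique homomorphism $GL(N,\mathcal L)\to$ abelianization of $\mathcal L^\times$ sending ${\rm diag}(\lambda_i)$ to the class of $\lambda_1*\cdots*\lambda_N$, set to $0$ on singular matrices), whose value on matrices over $\mathbb{H}[q]$ is identified with a polynomial representative. Writing $P=\sum_{k=0}^rq_2^k*\tilde P_k(q_1)$, $Q=\sum_{k=0}^sq_2^k*\tilde Q_k(q_1)$ with $\tilde P_k,\tilde Q_k\in\mathbb{H}[q_1]$, ${\rm Res}(P,Q;q_2)={\rm Det}^*_{r+s}(B(q_1))$, where $B(q_1)$ is the $(r+s)\times(r+s)$ Sylvester matrix whose $j$-th column ($1\le j\le s$) has $\tilde P_0,\dots,\tilde P_r$ in rows $j,\dots,j+r$, whose $(s+j)$-th column ($1\le j\le r$) has $\tilde Q_0,\dots,\tilde Q_s$ in rows $j,\dots,j+s$, and zeros elsewhere. "${\rm Res}\equiv0$" means it is zero. *)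

theory Defs
  imports Complex_Main
begin

datatype quat = Quat (qRe: real) (qI: real) (qJ: real) (qK: real)

instantiation quat :: ring_1
begin
definition "0 = Quat 0 0 0 0"
definition "1 = Quat 1 0 0 0"
definition "x + y = Quat (qRe x + qRe y) (qI x + qI y) (qJ x + qJ y) (qK x + qK y)"
definition "x - y = Quat (qRe x - qRe y) (qI x - qI y) (qJ x - qJ y) (qK x - qK y)"
definition "- x = Quat (- qRe x) (- qI x) (- qJ x) (- qK x)"
definition "x * y = Quat
   (qRe x * qRe y - qI x * qI y - qJ x * qJ y - qK x * qK y)
   (qRe x * qI y + qI x * qRe y + qJ x * qK y - qK x * qJ y)
   (qRe x * qJ y - qI x * qK y + qJ x * qRe y + qK x * qI y)
   (qRe x * qK y + qI x * qJ y - qJ x * qI y + qK x * qRe y)"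
instance
  by standard (simp_all add: zero_quat_def one_quat_def plus_quat_def minus_quat_def
      uminus_quat_def times_quat_def algebra_simps)
end

definition centralizer :: "quat \<Rightarrow> quat set" where
  "centralizer a = {q. q * a = a * q}"

text \<open>A polynomial \<open>\<Sum> q^n a_n\<close> is represented by its coefficient function (finite support).\<close>
type_synonym qpoly = "nat \<Rightarrow> quat"

definition qpolys :: "qpoly set" where
  "qpolys = {f. finite {n. f n \<noteq> 0}}"

definition qp_add :: "qpoly \<Rightarrow> qpoly \<Rightarrow> qpoly" where
  "qp_add f g = (\<lambda>n. f n + g n)"

definition qp_star :: "qpoly \<Rightarrow> qpoly \<Rightarrow> qpoly" where
  "qp_star f g = (\<lambda>n. \<Sum>k\<le>n. f k * g (n - k))"

definition qp_one :: qpoly where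
  "qp_one = (\<lambda>n. if n = 0 then 1 else 0)"

text \<open>\<open>\<phi>\<close> embeds \<open>(\<bbbH>[q],+,*)\<close> into the division ring \<open>'L\<close> as a skew field of (right)
  quotients: an injective unital ring homomorphism such that every element of \<open>'L\<close> is
  \<open>\<phi> a \<cdot> (\<phi> b)\<^sup>-\<^sup>1\<close> with \<open>b \<noteq> 0\<close>.\<close>
definition is_quotient_skew_field :: "(qpoly \<Rightarrow> 'L::division_ring) \<Rightarrow> bool" where
  "is_quotient_skew_field \<phi> \<longleftrightarrow>
     inj_on \<phi> qpolys \<and>
     \<phi> qp_one = 1 \<and>
     (\<forall>f\<in>qpolys. \<forall>g\<in>qpolys. \<phi> (qp_add f g) = \<phi> f + \<phi> g) \<and>
     (\<forall>f\<in>qpolys. \<forall>g\<in>qpolys. \<phi> (qp_star f g) = \<phi> f * \<phi> g) \<and>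
     (\<forall>x. \<exists>a\<in>qpolys. \<exists>b\<in>qpolys. b \<noteq> (\<lambda>_. 0) \<and> x = \<phi> a * inverse (\<phi> b))"

definition mat_invertible :: "nat \<Rightarrow> (nat \<Rightarrow> nat \<Rightarrow> 'L::ring_1) \<Rightarrow> bool" where
  "mat_invertible N M \<longleftrightarrow> (\<exists>C.
     (\<forall>i<N. \<forall>k<N. (\<Sum>j<N. M i j * C j k) = (if i = k then 1 else 0)) \<and>
     (\<forall>i<N. \<forall>k<N. (\<Sum>j<N. C i j * M j k) = (if i = k then 1 else 0)))"

text \<open>\<open>P n m\<close> is the coefficient \<open>a_{n,m}\<close> of \<open>q\<^sub>1^n q\<^sub>2^m\<close>.\<close>
type_synonym qpoly2 = "nat \<Rightarrow> nat \<Rightarrow> quat"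

definition qpolys2 :: "qpoly2 set" where
  "qpolys2 = {P. finite {(n, m). P n m \<noteq> 0}}"

definition qeval2 :: "qpoly2 \<Rightarrow> quat \<Rightarrow> quat \<Rightarrow> quat" where
  "qeval2 P x y = (\<Sum>(n, m)\<in>{(n, m). P n m \<noteq> 0}. x ^ n * y ^ m * P n m)"

definition qp2_star :: "qpoly2 \<Rightarrow> qpoly2 \<Rightarrow> qpoly2" where
  "qp2_star P Q = (\<lambda>n m. \<Sum>r\<le>n. \<Sum>s\<le>m. P r s * Q (n - r) (m - s))"

definition qp2_one :: qpoly2 where
  "qp2_one = (\<lambda>n m. if n = 0 \<and> m = 0 then 1 else 0)"

definition q2_minus :: "quat \<Rightarrow> qpoly2" where
  "q2_minus b = (\<lambda>n m. if n = 0 \<and> m = 1 then 1 else if n = 0 \<and> m = 0 then - b else 0)"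

primrec q2_minus_pow :: "quat \<Rightarrow> nat \<Rightarrow> qpoly2" where
  "q2_minus_pow b 0 = qp2_one"
| "q2_minus_pow b (Suc k) = qp2_star (q2_minus b) (q2_minus_pow b k)"

definition cullen_q2 :: "qpoly2 \<Rightarrow> qpoly2" where
  "cullen_q2 P = (\<lambda>n m. of_nat (Suc m) * P n (Suc m))"

definition zero_multiplicity :: "qpoly2 \<Rightarrow> quat \<Rightarrow> nat \<Rightarrow> bool" where
  "zero_multiplicity P b k \<longleftrightarrow>
     (\<forall>x. qeval2 P x b = 0) \<and>
     (\<exists>S\<in>qpolys2. P = qp2_star (q2_minus_pow b k) S \<and> \<not> (\<forall>x. qeval2 S x b = 0))"

text \<open>Degree in \<open>q\<^sub>2\<close> and the coefficient polynomials \<open>P~_k(q\<^sub>1)\<close> in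
  \<open>P = \<Sum>_k q\<^sub>2^k * P~_k(q\<^sub>1)\<close>.\<close>
definition deg_q2 :: "qpoly2 \<Rightarrow> nat" where
  "deg_q2 P = Max (insert 0 {m. \<exists>n. P n m \<noteq> 0})"

definition coeff_q2 :: "qpoly2 \<Rightarrow> nat \<Rightarrow> qpoly" where
  "coeff_q2 P k = (\<lambda>n. P n k)"

text \<open>Sylvester matrix (0-based indices \<open>i, j < r + s\<close>).\<close>
definition sylvester_q2 :: "qpoly2 \<Rightarrow> qpoly2 \<Rightarrow> nat \<Rightarrow> nat \<Rightarrow> qpoly" where
  "sylvester_q2 P Q i j =
     (let r = deg_q2 P; s = deg_q2 Q in
      if j < s then (if j \<le> i \<and> i - j \<le> r then coeff_q2 P (i - j) else (\<lambda>_. 0))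
      else (let j' = j - s in
            if j' \<le> i \<and> i - j' \<le> s then coeff_q2 Q (i - j') else (\<lambda>_. 0)))"

text \<open>\<open>Res(P,Q;q\<^sub>2) \<equiv> 0\<close>: the Dieudonn\'e determinant of the Sylvester matrix vanishes,
  i.e. the Sylvester matrix is singular over the skew field of quotients \<open>\<L>\<close>.\<close>
definition res_q2_zero :: "(qpoly \<Rightarrow> 'L::division_ring) \<Rightarrow> qpoly2 \<Rightarrow> qpoly2 \<Rightarrow> bool" where
  "res_q2_zero \<phi> P Q \<longleftrightarrow>
     \<not> mat_invertible (deg_q2 P + deg_q2 Q) (\<lambda>i j. \<phi> (sylvester_q2 P Q i j))"

end

theory Submission imports Defs "HOL-Computational_Algebra.Formal_Power_Series" begin

definition emb :: "qpoly2 \<Rightarrow> quat fps fps" where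
  "emb P = Abs_fps (\<lambda>m. Abs_fps (\<lambda>n. P n m))"

lemma emb_nth: "fps_nth (fps_nth (emb P) m) n = P n m"
  by (simp add: emb_def)

lemma emb_inj: "emb P = emb Q \<Longrightarrow> P = Q"
  by (metis emb_nth ext)

lemma emb_star: "emb (qp2_star P Q) = emb P * emb Q"
proof (rule fps_ext, rule fps_ext)
  fix m n
  have "fps_nth (fps_nth (emb P * emb Q) m) n = (\<Sum>s=0..m. \<Sum>r=0..n. P r s * Q (n - r) (m - s))"
    by (simp add: fps_mult_nth fps_sum_nth emb_nth)
  also have "\<dots> = (\<Sum>r=0..n. \<Sum>s=0..m. P r s * Q (n - r) (m - s))"
    by (rule sum.swap)
  finally show "fps_nth (fps_nth (emb (qp2_star P Q)) m) n = fps_nth (fps_nth (emb P * emb Q) m) n"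
    by (simp add: emb_nth qp2_star_def atLeast0AtMost)
qed

lemma star_assoc: "qp2_star (qp2_star F G) H = qp2_star F (qp2_star G H)"
  by (rule emb_inj) (simp add: emb_star mult.assoc)

lemma qm_star: "qp2_star (q2_minus b) X k t = (if t = 0 then 0 else X k (t - 1)) - b * X k t"
proof -
  define c where "c s = (if s = 1 then 1 else 0) + (if s = 0 then -b else (0::quat))" for s :: nat
  have e: "\<And>r s. q2_minus b r s = (if r = 0 then c s else 0)"
    by (simp add: q2_minus_def c_def)
  have "qp2_star (q2_minus b) X k t = (\<Sum>r\<le>k. if r = 0 then (\<Sum>s\<le>t. c s * X k (t - s)) else 0)"
    unfolding qp2_star_def e by (rule sum.cong) auto
  also have "\<dots> = (\<Sum>s\<le>t. c s * X k (t - s))"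
    by (simp add: sum.delta)
  also have "\<dots> = (\<Sum>s\<le>t. (if s = 1 then X k (t - s) else 0)) + (\<Sum>s\<le>t. (if s = 0 then - b * X k (t - s) else 0))"
    unfolding sum.distrib[symmetric] by (rule sum.cong) (auto simp: c_def)
  also have "\<dots> = (if t = 0 then 0 else X k (t - 1)) - b * X k t"
    by (cases t) (auto simp: sum.delta)
  finally show ?thesis .
qed


lemma star_closed:
  assumes "F \<in> qpolys2" "G \<in> qpolys2" shows "qp2_star F G \<in> qpolys2"
proof -
  let ?A = "{(n, m). F n m \<noteq> 0}" and ?B = "{(n, m). G n m \<noteq> 0}"
  have fin: "finite ((\<lambda>((a,b),(c,d)). (a + c, b + d)) ` (?A \<times> ?B))"
    using assms by (simp add: qpolys2_def)
  have "{(n, m). qp2_star F G n m \<noteq> 0} \<subseteq> (\<lambda>((a,b),(c,d)). (a + c, b + d)) ` (?A \<times> ?B)"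
  proof (clarsimp)
    fix n m assume ne: "qp2_star F G n m \<noteq> 0"
    then obtain r s where rs: "r \<le> n" "s \<le> m" "F r s * G (n - r) (m - s) \<noteq> 0"
      unfolding qp2_star_def by (metis (no_types, lifting) atMost_iff sum.neutral)
    then have "F r s \<noteq> 0" "G (n - r) (m - s) \<noteq> 0" by auto
    with rs show "(n, m) \<in> (\<lambda>((a,b),(c,d)). (a + c, b + d)) ` (?A \<times> ?B)"
      by (intro image_eqI[where x="((r, s), (n - r, m - s))"]) auto
  qed
  then show ?thesis using fin finite_subset by (auto simp: qpolys2_def)
qed

lemma add_closed:
  assumes "F \<in> qpolys2" "G \<in> qpolys2" shows "(\<lambda>k t. F k t + G k t) \<in> qpolys2"
proof -
  have "{(n, m). F n m + G n m \<noteq> 0} \<subseteq> {(n, m). F n m \<noteq> 0} \<union> {(n, m). G n m \<noteq> 0}" by auto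
  then show ?thesis using assms finite_subset by (auto simp: qpolys2_def)
qed

lemma cullen_closed:
  assumes "F \<in> qpolys2" shows "cullen_q2 F \<in> qpolys2"
proof -
  have "{(n, m). cullen_q2 F n m \<noteq> 0} \<subseteq> (\<lambda>(n, m). (n, m - 1)) ` {(n, m). F n m \<noteq> 0}"
  proof (intro subsetI)
    fix p assume "p \<in> {(n, m). cullen_q2 F n m \<noteq> 0}"
    then obtain n m where p: "p = (n, m)" "cullen_q2 F n m \<noteq> 0" by blast
    then have "F n (Suc m) \<noteq> 0" by (auto simp: cullen_q2_def)
    then show "p \<in> (\<lambda>(n, m). (n, m - 1)) ` {(n, m). F n m \<noteq> 0}"
      unfolding p by (intro image_eqI[where x="(n, Suc m)"]) auto
  qed
  then show ?thesis using assms finite_subset by (auto simp: qpolys2_def)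
qed

lemma qm_closed: "q2_minus b \<in> qpolys2"
proof -
  have "{(n, m). q2_minus b n m \<noteq> 0} \<subseteq> {(0,0),(0,1)}" by (auto simp: q2_minus_def split: if_splits)
  then show ?thesis using finite_subset by (auto simp: qpolys2_def)
qed

lemma one_closed: "qp2_one \<in> qpolys2"
proof -
  have "{(n, m). qp2_one n m \<noteq> 0} \<subseteq> {(0,0)}" by (auto simp: qp2_one_def split: if_splits)
  then show ?thesis using finite_subset by (auto simp: qpolys2_def)
qed

lemma pow_closed: "q2_minus_pow b k \<in> qpolys2"
  by (induction k) (auto intro: star_closed qm_closed one_closed)

lemma bound2:
  assumes "X \<in> qpolys2" shows "\<exists>D. \<forall>k t. D \<le> t \<longrightarrow> X k t = 0"
proof -
  let ?S = "snd ` {(n, m). X n m \<noteq> 0}"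
  have fin: "finite ?S" using assms by (simp add: qpolys2_def)
  have "X k t = 0" if "Suc (Max (insert 0 ?S)) \<le> t" for k t
  proof (rule ccontr)
    assume "X k t \<noteq> 0"
    then have "t \<in> ?S" by (force)
    then have "t \<le> Max (insert 0 ?S)" using fin by simp
    with that show False by simp
  qed
  then show ?thesis by blast
qed

lemma deg_bound:
  assumes "X \<in> qpolys2" "deg_q2 X < t" shows "X k t = 0"
proof (rule ccontr)
  assume "X k t \<noteq> 0"
  have "{m. \<exists>n. X n m \<noteq> 0} = snd ` {(n, m). X n m \<noteq> 0}" by force
  then have fin: "finite {m. \<exists>n. X n m \<noteq> 0}" using assms by (simp add: qpolys2_def)
  have "t \<in> {m. \<exists>n. X n m \<noteq> 0}" using \<open>X k t \<noteq> 0\<close> by blast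
  then have "t \<le> deg_q2 X" unfolding deg_q2_def using fin by simp
  with assms show False by simp
qed

lemma leibniz:
  "cullen_q2 (qp2_star (q2_minus b) X) = (\<lambda>k t. X k t + qp2_star (q2_minus b) (cullen_q2 X) k t)"
proof (intro ext)
  fix k t
  show "cullen_q2 (qp2_star (q2_minus b) X) k t = X k t + qp2_star (q2_minus b) (cullen_q2 X) k t"
  proof (cases t)
    case 0 then show ?thesis by (simp add: qm_star cullen_q2_def algebra_simps)
  next
    case (Suc u)
    have c: "of_nat (Suc (Suc u)) * (b * X k (Suc (Suc u))) = b * (of_nat (Suc (Suc u)) * X k (Suc (Suc u)))"
      by (metis mult.assoc mult_of_nat_commute)
    show ?thesis using Suc c by (simp add: qm_star cullen_q2_def algebra_simps del: of_nat_Suc)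
       (simp add: algebra_simps)
  qed
qed

lemma qm_linear:
  "(\<lambda>k t. qp2_star (q2_minus b) X k t + qp2_star (q2_minus b) Y k t) = qp2_star (q2_minus b) (\<lambda>k t. X k t + Y k t)"
  by (intro ext) (simp add: qm_star algebra_simps)

lemma tele:
  "(\<Sum>t<Suc D. b ^ t * qp2_star (q2_minus b) X k t) = - (b ^ Suc D * X k D)"
proof (induction D)
  case 0 then show ?case by (simp add: qm_star)
next
  case (Suc D)
  have "(\<Sum>t<Suc (Suc D). b ^ t * qp2_star (q2_minus b) X k t)
     = - (b ^ Suc D * X k D) + b ^ Suc D * (X k D - b * X k (Suc D))"
    using Suc by (simp add: qm_star)
  also have "\<dots> = - (b ^ Suc (Suc D) * X k (Suc D))"
    by (simp add: algebra_simps power_Suc2[of b "Suc D"] del: power_Suc)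
  finally show ?case .
qed

lemma ev_zero:
  assumes "X \<in> qpolys2" "F = qp2_star (q2_minus b) X" "F \<in> qpolys2"
  shows "(\<Sum>t\<le>deg_q2 F. b ^ t * F k t) = 0"
proof -
  obtain D where D: "\<And>k t. D \<le> t \<Longrightarrow> X k t = 0" using bound2[OF assms(1)] by blast
  define E where "E = max D (deg_q2 F)"
  have "(\<Sum>t\<le>deg_q2 F. b ^ t * F k t) = (\<Sum>t<Suc E. b ^ t * F k t)"
  proof (rule sum.mono_neutral_left)
    show "\<forall>i\<in>{..<Suc E} - {..deg_q2 F}. b ^ i * F k i = 0"
      using deg_bound[OF assms(3)] by auto
  qed (auto simp: E_def)
  also have "\<dots> = - (b ^ Suc E * X k E)" unfolding assms(2) by (rule tele)
  also have "\<dots> = 0" using D[of E] by (simp add: E_def)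
  finally show ?thesis .
qed

lemma qm_cancel:
  assumes "X \<in> qpolys2" "qp2_star (q2_minus b) X = (\<lambda>_ _. 0)" shows "X = (\<lambda>_ _. 0)"
proof (intro ext)
  fix k t
  obtain D where D: "\<And>k t. D \<le> t \<Longrightarrow> X k t = 0" using bound2[OF assms(1)] by blast
  have step: "X k u = b * X k (Suc u)" for u
    using fun_cong[OF fun_cong[OF assms(2), of k], of "Suc u"] by (simp add: qm_star)
  have "X k t = b ^ j * X k (t + j)" for j
  proof (induction j)
    case 0 then show ?case by simp
  next
    case (Suc j) then show ?case using step[of "t + j"] by (simp add: mult.assoc[symmetric] power_Suc2 del: power_Suc)
  qed
  from this[of D] D[of "t + D"] show "X k t = 0" by simp
qed

lemma pow_cancel:
  assumes "S \<in> qpolys2" "qp2_star (q2_minus_pow b j) S = (\<lambda>_ _. 0)" shows "S = (\<lambda>_ _. 0)"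
  using assms(2)
proof (induction j)
  case 0
  have "qp2_star qp2_one S = S"
  proof (intro ext)
    fix k t
    have "qp2_star qp2_one S k t = (\<Sum>r\<le>k. if r = 0 then (\<Sum>s\<le>t. if s = 0 then S k t else 0) else 0)"
    proof -
      have pw: "(if r = 0 \<and> s = 0 then 1 else 0) * S (k - r) (t - s) = (if r = 0 then (if s = 0 then S k t else 0) else 0)" for r s
        by auto
      show ?thesis unfolding qp2_star_def qp2_one_def pw
        by (intro sum.cong refl) (simp only: split: if_split, simp)
    qed
    then show "qp2_star qp2_one S k t = S k t" by (simp only: sum.delta finite_atMost atMost_iff) simp
  qed
  then show ?case using 0 by simp
next
  case (Suc j)
  have "qp2_star (q2_minus b) (qp2_star (q2_minus_pow b j) S) = (\<lambda>_ _. 0)"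
    using Suc.prems by (simp add: star_assoc)
  then have "qp2_star (q2_minus_pow b j) S = (\<lambda>_ _. 0)"
    by (rule qm_cancel[rotated]) (intro star_closed pow_closed assms(1))
  then show ?case by (rule Suc.IH)
qed


lemma shift_sum:
  fixes b :: quat
  assumes "j + r < N"
  shows "(\<Sum>i<N. if j \<le> i \<and> i - j \<le> r then b ^ i * F (i - j) else 0) = b ^ j * (\<Sum>t\<le>r. b ^ t * F t)"
proof -
  have "(\<Sum>i<N. if j \<le> i \<and> i - j \<le> r then b ^ i * F (i - j) else 0)
      = (\<Sum>i\<in>{i \<in> {..<N}. j \<le> i \<and> i - j \<le> r}. b ^ i * F (i - j))"
    by (rule sum.inter_filter[symmetric]) simp
  also have "{i \<in> {..<N}. j \<le> i \<and> i - j \<le> r} = {0 + j..r + j}" using assms by auto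
  also have "(\<Sum>i\<in>{0 + j..r + j}. b ^ i * F (i - j)) = (\<Sum>t\<in>{0..r}. b ^ (t + j) * F (t + j - j))"
    by (rule sum.shift_bounds_cl_nat_ivl)
  also have "\<dots> = (\<Sum>t\<le>r. b ^ j * (b ^ t * F t))"
    by (intro sum.cong) (auto simp: mult.assoc[symmetric] power_add[symmetric] add.commute)
  also have "\<dots> = b ^ j * (\<Sum>t\<le>r. b ^ t * F t)" by (simp add: sum_distrib_left)
  finally show ?thesis .
qed

definition cst :: "quat \<Rightarrow> qpoly" where "cst c = (\<lambda>n. if n = 0 then c else 0)"

lemma cst_qpolys: "cst c \<in> qpolys"
proof -
  have "{n. cst c n \<noteq> 0} \<subseteq> {0}" by (auto simp: cst_def)
  then show ?thesis using finite_subset by (auto simp: qpolys_def)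
qed

lemma cst_star: "qp_star (cst c) f = (\<lambda>k. c * f k)"
proof (intro ext)
  fix k
  have "qp_star (cst c) f k = (\<Sum>l\<le>k. if l = 0 then c * f k else 0)"
    unfolding qp_star_def cst_def by (intro sum.cong) auto
  then show "qp_star (cst c) f k = c * f k" by simp
qed

lemma scale_qpolys: "f \<in> qpolys \<Longrightarrow> (\<lambda>k. c * f k) \<in> qpolys"
proof -
  assume "f \<in> qpolys"
  moreover have "{k. c * f k \<noteq> 0} \<subseteq> {k. f k \<noteq> 0}" by auto
  ultimately show ?thesis using finite_subset by (auto simp: qpolys_def)
qed

lemma zero_qpolys: "(\<lambda>_. 0) \<in> qpolys" by (simp add: qpolys_def)

lemma phi_zero:
  assumes "is_quotient_skew_field \<phi>" shows "\<phi> (\<lambda>_. 0) = 0"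
proof -
  have "\<phi> (qp_add (\<lambda>_. 0) (\<lambda>_. 0)) = \<phi> (\<lambda>_. 0) + \<phi> (\<lambda>_. 0)"
    using assms zero_qpolys unfolding is_quotient_skew_field_def by blast
  then show ?thesis by (simp add: qp_add_def)
qed

lemma phi_sum:
  assumes "is_quotient_skew_field \<phi>" "finite I" "\<forall>i\<in>I. F i \<in> qpolys"
  shows "(\<lambda>k. \<Sum>i\<in>I. F i k) \<in> qpolys \<and> \<phi> (\<lambda>k. \<Sum>i\<in>I. F i k) = (\<Sum>i\<in>I. \<phi> (F i))"
  using assms(2,3)
proof (induction I rule: finite_induct)
  case empty then show ?case using phi_zero[OF assms(1)] zero_qpolys by simp
next
  case (insert x I)
  have e: "(\<lambda>k. \<Sum>i\<in>insert x I. F i k) = qp_add (F x) (\<lambda>k. \<Sum>i\<in>I. F i k)"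
    using insert by (simp add: qp_add_def)
  have fx: "F x \<in> qpolys" using insert by simp
  have ih: "(\<lambda>k. \<Sum>i\<in>I. F i k) \<in> qpolys" "\<phi> (\<lambda>k. \<Sum>i\<in>I. F i k) = (\<Sum>i\<in>I. \<phi> (F i))"
    using insert by auto
  have "qp_add (F x) (\<lambda>k. \<Sum>i\<in>I. F i k) \<in> qpolys"
  proof -
    have "{k. F x k + (\<Sum>i\<in>I. F i k) \<noteq> 0} \<subseteq> {k. F x k \<noteq> 0} \<union> {k. (\<Sum>i\<in>I. F i k) \<noteq> 0}" by auto
    then show ?thesis using fx ih(1) finite_subset by (auto simp: qpolys_def qp_add_def)
  qed
  moreover have "\<phi> (qp_add (F x) (\<lambda>k. \<Sum>i\<in>I. F i k)) = \<phi> (F x) + \<phi> (\<lambda>k. \<Sum>i\<in>I. F i k)"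
    using assms(1) fx ih(1) unfolding is_quotient_skew_field_def by blast
  ultimately show ?case using e ih insert by simp
qed

lemma coeff_qpolys: "P \<in> qpolys2 \<Longrightarrow> coeff_q2 P t \<in> qpolys"
proof -
  assume "P \<in> qpolys2"
  then have "finite (fst ` {(n, m). P n m \<noteq> 0})" by (simp add: qpolys2_def)
  moreover have "{n. coeff_q2 P t n \<noteq> 0} \<subseteq> fst ` {(n, m). P n m \<noteq> 0}"
    by (auto simp: coeff_q2_def image_iff)
  ultimately show ?thesis using finite_subset by (auto simp: qpolys_def)
qed

lemma syl_qpolys: "P \<in> qpolys2 \<Longrightarrow> Q \<in> qpolys2 \<Longrightarrow> sylvester_q2 P Q i j \<in> qpolys"
  by (simp add: sylvester_q2_def Let_def coeff_qpolys zero_qpolys)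


theorem proposition4p12:
  fixes a b :: quat and P :: qpoly2 and n :: nat and \<phi> :: "qpoly \<Rightarrow> 'L::division_ring"
  assumes "is_quotient_skew_field \<phi>"
    and "b \<in> centralizer a"
    and "P \<in> qpolys2"
    and "qeval2 P a b = 0"
    and "zero_multiplicity P b n"
    and "n \<ge> 2"
  shows "res_q2_zero \<phi> P (cullen_q2 P)"
proof -
  note phi = assms(1)
  obtain S where S: "S \<in> qpolys2" "P = qp2_star (q2_minus_pow b n) S" "\<not> (\<forall>x. qeval2 S x b = 0)"
    using assms(5) unfolding zero_multiplicity_def by blast
  obtain m where nm: "n = Suc (Suc m)" using assms(6) by (metis add_2_eq_Suc le_Suc_ex)
  define G where "G = qp2_star (q2_minus_pow b m) S"
  define H where "H = qp2_star (q2_minus b) G"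
  have G2: "G \<in> qpolys2" unfolding G_def by (intro star_closed pow_closed S(1))
  have H2: "H \<in> qpolys2" unfolding H_def by (intro star_closed qm_closed G2)
  have hP: "P = qp2_star (q2_minus b) H"
    unfolding S(2) nm H_def G_def by (simp add: star_assoc)
  define Q where "Q = cullen_q2 P"
  define X where "X = (\<lambda>k t. G k t + cullen_q2 H k t)"
  have X2: "X \<in> qpolys2" unfolding X_def by (intro add_closed G2 cullen_closed H2)
  have hQ: "Q = qp2_star (q2_minus b) X"
    unfolding Q_def hP leibniz X_def qm_linear[symmetric] H_def by simp
  have Q2: "Q \<in> qpolys2" unfolding hQ by (intro star_closed qm_closed X2)
  define r where "r = deg_q2 P"
  define s where "s = deg_q2 Q"
  have evP: "(\<Sum>t\<le>r. b ^ t * P k t) = 0" for k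
    unfolding r_def by (rule ev_zero[OF H2 hP assms(3)])
  have evQ: "(\<Sum>t\<le>s. b ^ t * Q k t) = 0" for k
    unfolding s_def by (rule ev_zero[OF X2 hQ Q2])
  have rpos: "0 < r"
  proof (rule ccontr)
    assume "\<not> 0 < r"
    then have r0: "r = 0" by simp
    have "P k t = 0" for k t
    proof (cases t)
      case 0 then show ?thesis using evP[of k] r0 by simp
    next
      case (Suc u) then show ?thesis using deg_bound[OF assms(3), of t k] r0 r_def by simp
    qed
    then have "qp2_star (q2_minus b) H = (\<lambda>_ _. 0)" using hP by auto
    then have "H = (\<lambda>_ _. 0)" by (rule qm_cancel[OF H2])
    then have "G = (\<lambda>_ _. 0)" unfolding H_def by (rule qm_cancel[OF G2])
    then have "S = (\<lambda>_ _. 0)" unfolding G_def by (rule pow_cancel[OF S(1)])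
    then have "qeval2 S x b = 0" for x by (simp add: qeval2_def)
    with S(3) show False by blast
  qed
  define N where "N = r + s"
  define y where "y i = \<phi> (cst (b ^ i))" for i
  define M where "M i j = \<phi> (sylvester_q2 P Q i j)" for i j
  have key: "(\<Sum>i<N. y i * M i j) = 0" if "j < N" for j
  proof -
    have fi: "\<forall>i\<in>{..<N}. (\<lambda>k. b ^ i * sylvester_q2 P Q i j k) \<in> qpolys"
      by (auto intro!: scale_qpolys syl_qpolys assms(3) Q2)
    have "(\<Sum>i<N. y i * M i j) = (\<Sum>i<N. \<phi> (\<lambda>k. b ^ i * sylvester_q2 P Q i j k))"
    proof (intro sum.cong refl)
      fix i
      have "\<phi> (qp_star (cst (b ^ i)) (sylvester_q2 P Q i j)) = y i * M i j"
        using phi cst_qpolys syl_qpolys[OF assms(3) Q2] unfolding is_quotient_skew_field_def y_def M_def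
        by blast
      then show "y i * M i j = \<phi> (\<lambda>k. b ^ i * sylvester_q2 P Q i j k)" by (simp add: cst_star)
    qed
    also have "\<dots> = \<phi> (\<lambda>k. \<Sum>i<N. b ^ i * sylvester_q2 P Q i j k)"
      using phi_sum[OF phi finite_lessThan fi] by simp
    also have "(\<lambda>k. \<Sum>i<N. b ^ i * sylvester_q2 P Q i j k) = (\<lambda>_. 0)"
    proof (intro ext)
      fix k
      show "(\<Sum>i<N. b ^ i * sylvester_q2 P Q i j k) = 0"
      proof (cases "j < s")
        case True
        have "(\<Sum>i<N. b ^ i * sylvester_q2 P Q i j k)
            = (\<Sum>i<N. if j \<le> i \<and> i - j \<le> r then b ^ i * P k (i - j) else 0)"
          using True by (intro sum.cong) (auto simp: sylvester_q2_def Let_def coeff_q2_def r_def s_def)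
        also have "\<dots> = b ^ j * (\<Sum>t\<le>r. b ^ t * P k t)"
          by (rule shift_sum) (use True in \<open>simp add: N_def\<close>)
        finally show ?thesis using evP by simp
      next
        case False
        have "(\<Sum>i<N. b ^ i * sylvester_q2 P Q i j k)
            = (\<Sum>i<N. if (j - s) \<le> i \<and> i - (j - s) \<le> s then b ^ i * Q k (i - (j - s)) else 0)"
          using False by (intro sum.cong) (auto simp: sylvester_q2_def Let_def coeff_q2_def r_def s_def)
        also have "\<dots> = b ^ (j - s) * (\<Sum>t\<le>s. b ^ t * Q k t)"
          by (rule shift_sum) (use False that in \<open>simp add: N_def\<close>)
        finally show ?thesis using evQ by simp
      qed
    qed
    finally show ?thesis using phi_zero[OF phi] by simp
  qed
  show ?thesis
    unfolding res_q2_zero_def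
  proof
    assume "mat_invertible (deg_q2 P + deg_q2 (cullen_q2 P)) (\<lambda>i j. \<phi> (sylvester_q2 P (cullen_q2 P) i j))"
    then obtain C where C: "\<forall>i<N. \<forall>k<N. (\<Sum>j<N. M i j * C j k) = (if i = k then 1 else 0)"
      unfolding mat_invertible_def N_def r_def s_def Q_def M_def by blast
    have N0: "0 < N" using rpos by (simp add: N_def)
    have "y 0 = (\<Sum>i<N. y i * (if i = 0 then 1 else 0))"
      using N0 by (simp add: if_distrib sum.delta cong: if_cong)
    also have "\<dots> = (\<Sum>i<N. y i * (\<Sum>j<N. M i j * C j 0))"
      using C N0 by (intro sum.cong) auto
    also have "\<dots> = (\<Sum>j<N. (\<Sum>i<N. y i * M i j) * C j 0)"
      by (simp add: sum_distrib_left sum_distrib_right mult.assoc) (rule sum.swap)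
    also have "\<dots> = 0" using key by simp
    finally have "y 0 = 0" .
    moreover have "y 0 = 1"
      using phi unfolding y_def is_quotient_skew_field_def
      by (simp add: cst_def qp_one_def)
    ultimately show False by simp
  qed
qed

end
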